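(* Let $\mathbf{S}$ be any one of the four systems $\mathbf{G3N}$, $\mathbf{G3NeF}$, $\mathbf{G3CoPC}$, $\mathbf{G3MPC}$. The cut rule "from $\Gamma\Rightarrow\alpha$ and $\Delta,\alpha\Rightarrow\varphi$ infer $\Gamma,\Delta\Rightarrow\varphi$" is admissible in $\mathbf{S}$: for all finite multisets $\Gamma,\Delta$ and formulas $\alpha,\varphi$, if $\Gamma\Rightarrow\alpha$ and $\Delta,\alpha\Rightarrow\varphi$ are derivable in $\mathbf{S}$, then $\Gamma,\Delta\Rightarrow\varphi$ is derivable in $\mathbf{S}$.
   Context: Formulas are generated from a countable set of propositional variables $p,q,\dots$ and the constant $\top$ by the grammar $\varphi::= p\mid\top\mid\varphi\wedge\varphi\mid\varphi\vee\varphi\mid\varphi\to\varphi\mid\neg\varphi$ (there is no constant $\bot$). $\varphi\leftrightarrow\psi$ abbreviates $(\varphi\to\psi)\wedge(\psi\to\varphi)$. A sequent is an expression $\Gamma\Rightarrow\varphi$ where $\Gamma$ is a finite multiset of formulas and $\varphi$ is a formula (the goal); $\Gamma,\Delta$ denotes multiset union and $\Gamma,\alpha$ denotes $\Gamma$ with one more occurrence of $\alpha$. Rules ($p$ a propositional variable): (ax) $\Gamma,p\Rightarrow p$ (no premises); ($\top$) $\Gamma\Rightarrow\top$ (no premises); ($\to$r) from $\Gamma,\alpha\Rightarrow\beta$ infer $\Gamma\Rightarrow\alpha\to\beta$; ($\to$l) from $\Gamma,\alpha\to\beta\Rightarrow\alpha$ and $\Gamma,\beta\Rightarrow\varphi$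 infer $\Gamma,\alpha\to\beta\Rightarrow\varphi$; ($\wedge$r) from $\Gamma\Rightarrow\alpha$ and $\Gamma\Rightarrow\beta$ infer $\Gamma\Rightarrow\alpha\wedge\beta$; ($\wedge$l) from $\Gamma,\alpha,\beta\Rightarrow\varphi$ infer $\Gamma,\alpha\wedge\beta\Rightarrow\varphi$; ($\vee$r$_1$), ($\vee$r$_2$) from $\Gamma\Rightarrow\alpha$ (resp. $\Gamma\Rightarrow\beta$) infer $\Gamma\Rightarrow\alpha\vee\beta$; ($\vee$l) from $\Gamma,\alpha\Rightarrow\varphi$ and $\Gamma,\beta\Rightarrow\varphi$ infer $\Gamma,\alpha\vee\beta\Rightarrow\varphi$; (n) from $\Gamma,\neg\alpha,\beta\Rightarrow\alpha$ and $\Gamma,\neg\alpha,\alpha\Rightarrow\beta$ infer $\Gamma,\neg\alpha\Rightarrow\neg\beta$; (nef) from $\Gamma,\neg\alpha\Rightarrow\alpha$ infer $\Gamma,\neg\alpha\Rightarrow\neg\beta$; (copc) from $\Gamma,\neg\alpha,\beta\Rightarrow\alpha$ infer $\Gamma,\neg\alpha\Rightarrow\neg\beta$; (an) from $\Gamma,\alpha\Rightarrow\neg\alpha$ infer $\Gamma\Rightarrow\neg\alpha$. The rules (ax) through ($\vee$l) are the positive rules. The four systems are: $\mathbf{G3N}$ = positive rules + (n); $\mathbf{G3NeF}$ = positive rules + (n) + (nef); $\mathbf{G3CoPC}$ = positive rules + (copc); $\mathbf{G3MPC}$ = positive rules + (copc) + (an). None of them contains weakening, contraction or cut as a rule. A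 derivation is a finite tree of rule instances with leaves instances of (ax) or ($\top$); its height is the number of inference steps on a longest branch. A sequent is derivable if it has a derivation; a formula $\varphi$ is a theorem if $\Rightarrow\varphi$ (empty antecedent) is derivable. *)

theory Defs
  imports Main "HOL-Library.Multiset"
begin

datatype fm = Var nat | Top | Conj fm fm | Disj fm fm | Imp fm fm | Neg fm

datatype sys = G3N | G3NeF | G3CoPC | G3MPC

definition has_n :: "sys \<Rightarrow> bool" where
  "has_n S \<longleftrightarrow> S = G3N \<or> S = G3NeF"
definition has_nef :: "sys \<Rightarrow> bool" where
  "has_nef S \<longleftrightarrow> S = G3NeF"
definition has_copc :: "sys \<Rightarrow> bool" where
  "has_copc S \<longleftrightarrow> S = G3CoPC \<or> S = G3MPC"
definition has_an :: "sys \<Rightarrow> bool" where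
  "has_an S \<longleftrightarrow> S = G3MPC"

inductive derivable :: "sys \<Rightarrow> fm multiset \<Rightarrow> fm \<Rightarrow> bool" where
  ax: "derivable S (add_mset (Var p) \<Gamma>) (Var p)"
| top: "derivable S \<Gamma> Top"
| impR: "derivable S (add_mset a \<Gamma>) b \<Longrightarrow> derivable S \<Gamma> (Imp a b)"
| impL: "derivable S (add_mset (Imp a b) \<Gamma>) a \<Longrightarrow> derivable S (add_mset b \<Gamma>) \<phi>
         \<Longrightarrow> derivable S (add_mset (Imp a b) \<Gamma>) \<phi>"
| conjR: "derivable S \<Gamma> a \<Longrightarrow> derivable S \<Gamma> b \<Longrightarrow> derivable S \<Gamma> (Conj a b)"
| conjL: "derivable S (add_mset a (add_mset b \<Gamma>)) \<phi> \<Longrightarrow> derivable S (add_mset (Conj a b) \<Gamma>) \<phi>"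
| disjR1: "derivable S \<Gamma> a \<Longrightarrow> derivable S \<Gamma> (Disj a b)"
| disjR2: "derivable S \<Gamma> b \<Longrightarrow> derivable S \<Gamma> (Disj a b)"
| disjL: "derivable S (add_mset a \<Gamma>) \<phi> \<Longrightarrow> derivable S (add_mset b \<Gamma>) \<phi>
          \<Longrightarrow> derivable S (add_mset (Disj a b) \<Gamma>) \<phi>"
| n: "has_n S \<Longrightarrow> derivable S (add_mset (Neg a) (add_mset b \<Gamma>)) a
      \<Longrightarrow> derivable S (add_mset (Neg a) (add_mset a \<Gamma>)) b
      \<Longrightarrow> derivable S (add_mset (Neg a) \<Gamma>) (Neg b)"
| nef: "has_nef S \<Longrightarrow> derivable S (add_mset (Neg a) \<Gamma>) a
      \<Longrightarrow> derivable S (add_mset (Neg a) \<Gamma>) (Neg b)"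
| copc: "has_copc S \<Longrightarrow> derivable S (add_mset (Neg a) (add_mset b \<Gamma>)) a
      \<Longrightarrow> derivable S (add_mset (Neg a) \<Gamma>) (Neg b)"
| an: "has_an S \<Longrightarrow> derivable S (add_mset a \<Gamma>) (Neg a)
      \<Longrightarrow> derivable S \<Gamma> (Neg a)"

end

theory Submission
  imports Defs
begin

lemma diff_in[simp]: "A \<in># M \<Longrightarrow> add_mset X M - {#A#} = add_mset X (M - {#A#})"
  by (metis multi_member_split add_mset_commute add_mset_remove_trivial)
lemma cnt2: "2 \<le> count (add_mset X M) A \<Longrightarrow> A \<in># M"
  by (cases "X = A") (simp_all flip: count_greater_zero_iff)


lemma weak: "derivable S \<Gamma> \<phi> \<Longrightarrow> derivable S (\<Gamma> + \<Theta>) \<phi>"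
  by (induction rule: derivable.induct) (auto intro: derivable.intros)

lemma weak1: "derivable S \<Gamma> \<phi> \<Longrightarrow> derivable S (add_mset x \<Gamma>) \<phi>"
  using weak[of S \<Gamma> \<phi> "{#x#}"] by simp

lemma weak': "derivable S \<Gamma> \<phi> \<Longrightarrow> \<Gamma> \<subseteq># \<Theta> \<Longrightarrow> derivable S \<Theta> \<phi>"
  by (metis subset_mset.add_diff_inverse weak)

lemma axm: "Var p \<in># M \<Longrightarrow> derivable S M (Var p)"
  by (metis derivable.ax insert_DiffM)

lemma top_rem: "derivable S \<Theta> \<phi> \<Longrightarrow> Top \<in># \<Theta> \<Longrightarrow> derivable S (\<Theta> - {#Top#}) \<phi>"
proof (induction rule: derivable.induct)
qed (auto intro: derivable.intros axm)

lemma impL_m: "Imp a b \<in># M \<Longrightarrow> derivable S M a \<Longrightarrow> derivable S (add_mset b (M - {#Imp a b#})) \<phi> \<Longrightarrow> derivable S M \<phi>"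
  using derivable.impL[of S a b "M - {#Imp a b#}" \<phi>] by simp
lemma conjL_m: "Conj a b \<in># M \<Longrightarrow> derivable S (add_mset a (add_mset b (M - {#Conj a b#}))) \<phi> \<Longrightarrow> derivable S M \<phi>"
  using derivable.conjL[of S a b "M - {#Conj a b#}" \<phi>] by simp
lemma disjL_m: "Disj a b \<in># M \<Longrightarrow> derivable S (add_mset a (M - {#Disj a b#})) \<phi> \<Longrightarrow> derivable S (add_mset b (M - {#Disj a b#})) \<phi> \<Longrightarrow> derivable S M \<phi>"
  using derivable.disjL[of S a "M - {#Disj a b#}" \<phi> b] by simp
lemma n_m: "has_n S \<Longrightarrow> Neg a \<in># M \<Longrightarrow> derivable S (add_mset b M) a \<Longrightarrow> derivable S (add_mset a M) b \<Longrightarrow> derivable S M (Neg b)"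
  using derivable.n[of S a b "M - {#Neg a#}"] by (simp add: add_mset_commute)
lemma nef_m: "has_nef S \<Longrightarrow> Neg a \<in># M \<Longrightarrow> derivable S M a \<Longrightarrow> derivable S M (Neg b)"
  using derivable.nef[of S a "M - {#Neg a#}" b] by simp
lemma copc_m: "has_copc S \<Longrightarrow> Neg a \<in># M \<Longrightarrow> derivable S (add_mset b M) a \<Longrightarrow> derivable S M (Neg b)"
  using derivable.copc[of S a b "M - {#Neg a#}"] by (simp add: add_mset_commute)



lemma inv_conjL: "derivable S \<Theta> \<phi> \<Longrightarrow> Conj a b \<in># \<Theta> \<Longrightarrow> derivable S (add_mset a (add_mset b (\<Theta> - {#Conj a b#}))) \<phi>"
proof (induction rule: derivable.induct)
  case (conjL S' x y \<Gamma> \<phi>)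
  show ?case
  proof (cases "Conj x y = Conj a b")
    case True
    then show ?thesis using conjL by simp
  next
    case False
    hence m: "Conj a b \<in># \<Gamma>" using conjL.prems by auto
    hence "derivable S' (add_mset x (add_mset y (add_mset a (add_mset b (\<Gamma> - {#Conj a b#}))))) \<phi>"
      using conjL.IH by (simp add: add_mset_commute)
    hence "derivable S' (add_mset (Conj x y) (add_mset a (add_mset b (\<Gamma> - {#Conj a b#})))) \<phi>"
      by (rule derivable.conjL)
    then show ?thesis using m by (simp add: add_mset_commute)
  qed

next
  case (impL S' x y \<Gamma> \<phi>)
  show ?case by ((intro conjI)?; rule impL_m[where a=x and b=y]; insert impL; auto simp: add_mset_commute)
next
  case (disjL S' x \<Gamma> \<phi> y)
  show ?case by ((intro conjI)?; rule disjL_m[where a=x and b=y]; insert disjL; auto simp: add_mset_commute)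
next
  case (n S' x y \<Gamma>)
  show ?case by ((intro conjI)?; rule n_m[where a=x]; insert n; auto simp: add_mset_commute)
next
  case (nef S' x \<Gamma> y)
  show ?case by ((intro conjI)?; rule nef_m[where a=x]; insert nef; auto simp: add_mset_commute)
next
  case (copc S' x y \<Gamma>)
  show ?case by ((intro conjI)?; rule copc_m[where a=x]; insert copc; auto simp: add_mset_commute)
qed (auto simp: add_mset_commute intro: derivable.intros axm)

lemma inv_disjL: "derivable S \<Theta> \<phi> \<Longrightarrow> Disj a b \<in># \<Theta> \<Longrightarrow> derivable S (add_mset a (\<Theta> - {#Disj a b#})) \<phi> \<and> derivable S (add_mset b (\<Theta> - {#Disj a b#})) \<phi>"
proof (induction rule: derivable.induct)
  case (disjL S' x \<Gamma> \<phi> y)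
  show ?case
  proof (cases "Disj x y = Disj a b")
    case True
    then show ?thesis using disjL by simp
  next
    case False
    hence m: "Disj a b \<in># \<Gamma>" using disjL.prems by auto
    have "derivable S' (add_mset x (add_mset a (\<Gamma> - {#Disj a b#}))) \<phi>"
         "derivable S' (add_mset y (add_mset a (\<Gamma> - {#Disj a b#}))) \<phi>"
         "derivable S' (add_mset x (add_mset b (\<Gamma> - {#Disj a b#}))) \<phi>"
         "derivable S' (add_mset y (add_mset b (\<Gamma> - {#Disj a b#}))) \<phi>"
      using disjL.IH m by (simp_all add: add_mset_commute)
    hence "derivable S' (add_mset (Disj x y) (add_mset a (\<Gamma> - {#Disj a b#}))) \<phi>"
          "derivable S' (add_mset (Disj x y) (add_mset b (\<Gamma> - {#Disj a b#}))) \<phi>"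
      by (auto intro: derivable.disjL)
    then show ?thesis using m by (simp add: add_mset_commute)
  qed

next
  case (impL S' x y \<Gamma> \<phi>)
  show ?case by ((intro conjI)?; rule impL_m[where a=x and b=y]; insert impL; auto simp: add_mset_commute)
next
  case (conjL S' x y \<Gamma> \<phi>)
  show ?case by ((intro conjI)?; rule conjL_m[where a=x and b=y]; insert conjL; auto simp: add_mset_commute)
next
  case (n S' x y \<Gamma>)
  show ?case by ((intro conjI)?; rule n_m[where a=x]; insert n; auto simp: add_mset_commute)
next
  case (nef S' x \<Gamma> y)
  show ?case by ((intro conjI)?; rule nef_m[where a=x]; insert nef; auto simp: add_mset_commute)
next
  case (copc S' x y \<Gamma>)
  show ?case by ((intro conjI)?; rule copc_m[where a=x]; insert copc; auto simp: add_mset_commute)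
qed (auto simp: add_mset_commute intro: derivable.intros axm)

lemma inv_impL: "derivable S \<Theta> \<phi> \<Longrightarrow> Imp a b \<in># \<Theta> \<Longrightarrow> derivable S (add_mset b (\<Theta> - {#Imp a b#})) \<phi>"
proof (induction rule: derivable.induct)
  case (impL S' x y \<Gamma> \<phi>)
  show ?case
  proof (cases "Imp x y = Imp a b")
    case True
    then show ?thesis using impL by simp
  next
    case False
    hence m: "Imp a b \<in># \<Gamma>" using impL.prems by auto
    have 1: "derivable S' (add_mset (Imp x y) (add_mset b (\<Gamma> - {#Imp a b#}))) x"
      using impL.IH(1) m by (simp add: add_mset_commute)
    have 2: "derivable S' (add_mset y (add_mset b (\<Gamma> - {#Imp a b#}))) \<phi>"
      using impL.IH(2) m by (simp add: add_mset_commute)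
    have "derivable S' (add_mset (Imp x y) (add_mset b (\<Gamma> - {#Imp a b#}))) \<phi>"
      using derivable.impL[OF 1 2] .
    then show ?thesis using m by (simp add: add_mset_commute)
  qed

next
  case (disjL S' x \<Gamma> \<phi> y)
  show ?case by ((intro conjI)?; rule disjL_m[where a=x and b=y]; insert disjL; auto simp: add_mset_commute)
next
  case (conjL S' x y \<Gamma> \<phi>)
  show ?case by ((intro conjI)?; rule conjL_m[where a=x and b=y]; insert conjL; auto simp: add_mset_commute)
next
  case (n S' x y \<Gamma>)
  show ?case by ((intro conjI)?; rule n_m[where a=x]; insert n; auto simp: add_mset_commute)
next
  case (nef S' x \<Gamma> y)
  show ?case by ((intro conjI)?; rule nef_m[where a=x]; insert nef; auto simp: add_mset_commute)
next
  case (copc S' x y \<Gamma>)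
  show ?case by ((intro conjI)?; rule copc_m[where a=x]; insert copc; auto simp: add_mset_commute)
qed (auto simp: add_mset_commute intro: derivable.intros axm)

lemma inv_impR: "derivable S \<Gamma> \<psi> \<Longrightarrow> \<psi> = Imp a b \<Longrightarrow> derivable S (add_mset a \<Gamma>) b"
proof (induction rule: derivable.induct)
  case (impL S' x y \<Gamma>)
  have 1: "derivable S' (add_mset (Imp x y) (add_mset a \<Gamma>)) x"
    using weak1[OF impL.hyps(1), of a] by (simp add: add_mset_commute)
  have 2: "derivable S' (add_mset y (add_mset a \<Gamma>)) b" using impL by (simp add: add_mset_commute)
  show ?case using derivable.impL[OF 1 2] by (simp add: add_mset_commute)
next
  case (conjL S' x y \<Gamma>)
  hence "derivable S' (add_mset x (add_mset y (add_mset a \<Gamma>))) b" by (simp add: add_mset_commute)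
  hence "derivable S' (add_mset (Conj x y) (add_mset a \<Gamma>)) b" by (rule derivable.conjL)
  then show ?case by (simp add: add_mset_commute)
next
  case (disjL S' x \<Gamma> \<phi> y)
  hence "derivable S' (add_mset x (add_mset a \<Gamma>)) b" "derivable S' (add_mset y (add_mset a \<Gamma>)) b"
    by (simp_all add: add_mset_commute)
  hence "derivable S' (add_mset (Disj x y) (add_mset a \<Gamma>)) b" by (rule derivable.disjL)
  then show ?case by (simp add: add_mset_commute)
qed (auto simp: add_mset_commute intro: derivable.intros weak)

lemma inv_conjR: "derivable S \<Gamma> \<psi> \<Longrightarrow> \<psi> = Conj a b \<Longrightarrow> derivable S \<Gamma> a \<and> derivable S \<Gamma> b"
proof (induction rule: derivable.induct)
qed (auto simp: add_mset_commute intro: derivable.intros weak)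



lemma contr_step:
  assumes IH: "\<And>B T \<Theta> \<psi>. size B < size A \<Longrightarrow> derivable T \<Theta> \<psi> \<Longrightarrow> 2 \<le> count \<Theta> B \<Longrightarrow> derivable T (\<Theta> - {#B#}) \<psi>"
  shows "derivable S \<Theta> \<phi> \<Longrightarrow> 2 \<le> count \<Theta> A \<Longrightarrow> derivable S (\<Theta> - {#A#}) \<phi>"
proof (induction rule: derivable.induct)
  case (impL S' x y \<Gamma> \<phi>)
  show ?case
  proof (cases "A = Imp x y")
    case True
    hence m: "Imp x y \<in># \<Gamma>" using impL.prems by (simp flip: count_greater_zero_iff)
    have 1: "derivable S' \<Gamma> x" using impL.IH(1)[OF impL.prems] True by simp
    have "derivable S' (add_mset y (add_mset y (\<Gamma> - {#Imp x y#}))) \<phi>"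
      using inv_impL[where a=x and b=y, OF impL.hyps(2)] m by simp
    from IH[of y _ _ _, OF _ this] have "derivable S' (add_mset y (\<Gamma> - {#Imp x y#})) \<phi>" using True by simp
    hence "derivable S' (add_mset (Imp x y) (\<Gamma> - {#Imp x y#})) \<phi>"
      using derivable.impL[of S' x y "\<Gamma> - {#Imp x y#}" \<phi>] 1 m by simp
    then show ?thesis using True m by simp
  next
    case False
    hence m: "2 \<le> count \<Gamma> A" using impL.prems by simp
    have m2: "A \<in># \<Gamma>" using m by (simp flip: count_greater_zero_iff)
    show ?thesis by (rule impL_m[where a=x and b=y]; insert impL m m2; auto simp: add_mset_commute)
  qed
next
  case (conjL S' x y \<Gamma> \<phi>)
  show ?case
  proof (cases "A = Conj x y")
    case True
    hence m: "Conj x y \<in># \<Gamma>" using conjL.prems by (simp flip: count_greater_zero_iff)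
    have "derivable S' (add_mset x (add_mset y (add_mset x (add_mset y (\<Gamma> - {#Conj x y#}))))) \<phi>"
      using inv_conjL[where a=x and b=y, OF conjL.hyps(1)] m by simp
    from IH[of x _ _ _, OF _ this] have "derivable S' (add_mset y (add_mset x (add_mset y (\<Gamma> - {#Conj x y#})))) \<phi>" using True by simp
    from IH[of y _ _ _, OF _ this] have "derivable S' (add_mset x (add_mset y (\<Gamma> - {#Conj x y#}))) \<phi>" using True by (simp add: add_mset_commute)
    hence "derivable S' (add_mset (Conj x y) (\<Gamma> - {#Conj x y#})) \<phi>"
      using derivable.conjL by blast
    then show ?thesis using True m by simp
  next
    case False
    hence m: "2 \<le> count \<Gamma> A" using conjL.prems by simp
    have m2: "A \<in># \<Gamma>" using m by (simp flip: count_greater_zero_iff)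
    show ?thesis by (rule conjL_m[where a=x and b=y]; insert conjL m m2; auto simp: add_mset_commute)
  qed
next
  case (disjL S' x \<Gamma> \<phi> y)
  show ?case
  proof (cases "A = Disj x y")
    case True
    hence m: "Disj x y \<in># \<Gamma>" using disjL.prems by (simp flip: count_greater_zero_iff)
    have "derivable S' (add_mset x (add_mset x (\<Gamma> - {#Disj x y#}))) \<phi>"
      using inv_disjL[where a=x and b=y, OF disjL.hyps(1)] m by simp
    from IH[of x _ _ _, OF _ this] have 1: "derivable S' (add_mset x (\<Gamma> - {#Disj x y#})) \<phi>"
      using True by simp
    have "derivable S' (add_mset y (add_mset y (\<Gamma> - {#Disj x y#}))) \<phi>"
      using inv_disjL[where a=x and b=y, OF disjL.hyps(2)] m by simp
    from IH[of y _ _ _, OF _ this] have 2: "derivable S' (add_mset y (\<Gamma> - {#Disj x y#})) \<phi>"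
      using True by simp
    have "derivable S' (add_mset (Disj x y) (\<Gamma> - {#Disj x y#})) \<phi>"
      using derivable.disjL[OF 1 2] .
    then show ?thesis using True m by simp
  next
    case False
    hence m: "2 \<le> count \<Gamma> A" using disjL.prems by simp
    have m2: "A \<in># \<Gamma>" using m by (simp flip: count_greater_zero_iff)
    show ?thesis by (rule disjL_m[where a=x and b=y]; insert disjL m m2; auto simp: add_mset_commute)
  qed
next
  case (n S' x y \<Gamma>)
  have m: "A \<in># \<Gamma>" using cnt2[OF n.prems] .
  show ?case by (rule n_m[where a=x]; insert n m; auto simp: add_mset_commute)
next
  case (nef S' x \<Gamma> y)
  have m: "A \<in># \<Gamma>" using cnt2[OF nef.prems] .
  show ?case by (rule nef_m[where a=x]; insert nef m; auto simp: add_mset_commute)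
next
  case (copc S' x y \<Gamma>)
  have m: "A \<in># \<Gamma>" using cnt2[OF copc.prems] .
  show ?case by (rule copc_m[where a=x]; insert copc m; auto simp: add_mset_commute)
next
  case (an S' x \<Gamma>)
  have m: "A \<in># \<Gamma>" using an.prems by (simp flip: count_greater_zero_iff)
  show ?case by (rule derivable.an; insert an m; auto simp: add_mset_commute)
next
  case (ax S' p \<Gamma>)
  have m: "A \<in># \<Gamma>" using cnt2[OF ax.prems] .
  show ?case by (rule axm; insert m; simp)
next
  case (top S' \<Gamma>)
  show ?case by (rule derivable.top)
next
  case (impR S' x \<Gamma> y)
  have m: "A \<in># \<Gamma>" using impR.prems by (simp flip: count_greater_zero_iff)
  show ?case by (rule derivable.impR; insert impR m; auto simp: add_mset_commute)
next
  case (conjR S' \<Gamma> x y)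
  show ?case by (rule derivable.conjR; insert conjR; auto)
next
  case (disjR1 S' \<Gamma> x y)
  show ?case by (rule derivable.disjR1; insert disjR1; auto)
next
  case (disjR2 S' \<Gamma> x y)
  show ?case by (rule derivable.disjR2; insert disjR2; auto)
qed

lemma contr: "derivable S \<Theta> \<phi> \<Longrightarrow> 2 \<le> count \<Theta> A \<Longrightarrow> derivable S (\<Theta> - {#A#}) \<phi>"
proof (induction A arbitrary: S \<Theta> \<phi> rule: measure_induct_rule[of size])
  case (less A)
  then show ?case using contr_step[of A S \<Theta> \<phi>] by blast
qed

lemma contr_mset: "derivable S (M + M + \<Theta>) \<phi> \<Longrightarrow> derivable S (M + \<Theta>) \<phi>"
proof (induction M arbitrary: \<Theta>)
  case empty
  then show ?case by simp
next
  case (add x M)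
  have "derivable S (add_mset x (add_mset x (M + M + \<Theta>))) \<phi>" using add.prems by (simp add: add_mset_commute ac_simps)
  from contr[of S _ \<phi> x, OF this] have "derivable S (add_mset x (M + M + \<Theta>)) \<phi>" by simp
  hence "derivable S (M + M + add_mset x \<Theta>) \<phi>" by simp
  hence "derivable S (M + add_mset x \<Theta>) \<phi>" using add.IH by blast
  then show ?case by simp
qed



definition cutP :: "sys \<Rightarrow> fm \<Rightarrow> bool" where
  "cutP S \<alpha> \<longleftrightarrow> (\<forall>\<Gamma> \<Delta> \<phi>. derivable S \<Gamma> \<alpha> \<longrightarrow> derivable S (add_mset \<alpha> \<Delta>) \<phi> \<longrightarrow> derivable S (\<Gamma> + \<Delta>) \<phi>)"

lemma cutD: "cutP S \<alpha> \<Longrightarrow> derivable S \<Gamma> \<alpha> \<Longrightarrow> derivable S (add_mset \<alpha> \<Delta>) \<phi> \<Longrightarrow> derivable S (\<Gamma> + \<Delta>) \<phi>"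
  unfolding cutP_def by blast

lemma inner:
  assumes IHs: "\<And>\<beta>. size \<beta> < size \<alpha> \<Longrightarrow> cutP S \<beta>"
    and L: "derivable S \<Gamma> \<alpha>"
    and hdisj: "\<And>a b. \<alpha> = Disj a b \<Longrightarrow> derivable S \<Gamma> a \<or> derivable S \<Gamma> b"
    and hn: "\<And>a d \<Delta>0. \<alpha> = Neg a \<Longrightarrow> has_n S \<Longrightarrow> derivable S (\<Gamma> + add_mset d \<Delta>0) a
               \<Longrightarrow> derivable S (\<Gamma> + add_mset a \<Delta>0) d \<Longrightarrow> derivable S (\<Gamma> + \<Delta>0) (Neg d)"
    and hnef: "\<And>a d \<Delta>0. \<alpha> = Neg a \<Longrightarrow> has_nef S \<Longrightarrow> derivable S (\<Gamma> + \<Delta>0) a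
               \<Longrightarrow> derivable S (\<Gamma> + \<Delta>0) (Neg d)"
    and hcopc: "\<And>a d \<Delta>0. \<alpha> = Neg a \<Longrightarrow> has_copc S \<Longrightarrow> derivable S (add_mset (Neg a) (add_mset d \<Delta>0)) a
               \<Longrightarrow> derivable S (\<Gamma> + add_mset d \<Delta>0) a \<Longrightarrow> derivable S (\<Gamma> + \<Delta>0) (Neg d)"
  shows "derivable T \<Theta> \<phi> \<Longrightarrow> T = S \<Longrightarrow> \<alpha> \<in># \<Theta> \<Longrightarrow> derivable S (\<Gamma> + (\<Theta> - {#\<alpha>#})) \<phi>"
proof (induction rule: derivable.induct)
  case (ax S' p \<Gamma>0)
  show ?case
  proof (cases "\<alpha> = Var p")
    case True
    then show ?thesis using weak[OF L, of \<Gamma>0] by simp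
  next
    case False
    hence "Var p \<in># \<Gamma> + (add_mset (Var p) \<Gamma>0 - {#\<alpha>#})" using ax.prems by simp
    then show ?thesis by (rule axm)
  qed
next
  case (top S' \<Gamma>0)
  show ?case by (rule derivable.top)
next
  case (impR S' x \<Gamma>0 y)
  have m: "\<alpha> \<in># \<Gamma>0" using impR.prems by simp
  show ?case by (rule derivable.impR; insert impR m; auto simp: add_mset_commute)
next
  case (conjR S' \<Gamma>0 x y)
  show ?case by (rule derivable.conjR; insert conjR; auto)
next
  case (disjR1 S' \<Gamma>0 x y)
  show ?case by (rule derivable.disjR1; insert disjR1; auto)
next
  case (disjR2 S' \<Gamma>0 x y)
  show ?case by (rule derivable.disjR2; insert disjR2; auto)
next
  case (an S' x \<Gamma>0)
  have m: "\<alpha> \<in># \<Gamma>0" using an.prems by simp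
  show ?case by (rule derivable.an; insert an m; auto simp: add_mset_commute)
next
  case (impL S' x y \<Gamma>0 \<phi>)
  note eq = impL.prems(1)
  show ?case
  proof (cases "\<alpha> = Imp x y")
    case True
    have 1: "derivable S (\<Gamma> + \<Gamma>0) x" using impL.IH(1)[OF eq] True by simp
    have 2: "derivable S (add_mset x \<Gamma>) y" using inv_impR[OF L] True by blast
    have 3: "derivable S (\<Gamma> + \<Gamma>0 + \<Gamma>) y" using cutD[OF IHs 1 2] True by simp
    have r: "derivable S (add_mset y \<Gamma>0) \<phi>" using impL.hyps(2) eq by simp
    have 4: "derivable S (\<Gamma> + \<Gamma>0 + \<Gamma> + \<Gamma>0) \<phi>" using cutD[OF IHs 3 r] True by simp
    have "derivable S ((\<Gamma> + \<Gamma>0) + (\<Gamma> + \<Gamma>0) + {#}) \<phi>" using 4 by (simp add: ac_simps)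
    from contr_mset[OF this] have "derivable S (\<Gamma> + \<Gamma>0) \<phi>" by simp
    then show ?thesis using True by simp
  next
    case False
    have m: "\<alpha> \<in># \<Gamma>0" using impL.prems False by simp
    show ?thesis by (rule impL_m[where a=x and b=y]; insert impL m; auto simp: add_mset_commute)
  qed
next
  case (conjL S' x y \<Gamma>0 \<phi>)
  note eq = conjL.prems(1)
  show ?case
  proof (cases "\<alpha> = Conj x y")
    case True
    have 1: "derivable S \<Gamma> x" "derivable S \<Gamma> y" using inv_conjR[OF L] True by blast+
    have r: "derivable S (add_mset x (add_mset y \<Gamma>0)) \<phi>" using conjL.hyps eq by simp
    have 3: "derivable S (\<Gamma> + add_mset y \<Gamma>0) \<phi>" using cutD[OF IHs 1(1) r] True by simp
    have 4: "derivable S (\<Gamma> + (\<Gamma> + \<Gamma>0)) \<phi>" using cutD[OF IHs 1(2)] 3 True by simp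
    have "derivable S (\<Gamma> + \<Gamma> + \<Gamma>0) \<phi>" using 4 by (simp add: ac_simps)
    from contr_mset[OF this] have "derivable S (\<Gamma> + \<Gamma>0) \<phi>" .
    then show ?thesis using True by simp
  next
    case False
    have m: "\<alpha> \<in># \<Gamma>0" using conjL.prems False by simp
    show ?thesis by (rule conjL_m[where a=x and b=y]; insert conjL m; auto simp: add_mset_commute)
  qed
next
  case (disjL S' x \<Gamma>0 \<phi> y)
  note eq = disjL.prems(1)
  show ?case
  proof (cases "\<alpha> = Disj x y")
    case True
    have r: "derivable S (add_mset x \<Gamma>0) \<phi>" "derivable S (add_mset y \<Gamma>0) \<phi>" using disjL.hyps eq by simp_all
    have "derivable S (\<Gamma> + \<Gamma>0) \<phi>"
    proof (cases "derivable S \<Gamma> x")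
      case True
      then show ?thesis using cutD[OF IHs True r(1)] \<open>\<alpha> = Disj x y\<close> by simp
    next
      case False
      hence "derivable S \<Gamma> y" using hdisj[OF \<open>\<alpha> = Disj x y\<close>] by blast
      then show ?thesis using cutD[OF IHs _ r(2)] \<open>\<alpha> = Disj x y\<close> by simp
    qed
    then show ?thesis using True by simp
  next
    case False
    have m: "\<alpha> \<in># \<Gamma>0" using disjL.prems False by simp
    show ?thesis by (rule disjL_m[where a=x and b=y]; insert disjL m; auto simp: add_mset_commute)
  qed
next
  case (n S' x y \<Gamma>0)
  note eq = n.prems(1)
  show ?case
  proof (cases "\<alpha> = Neg x")
    case True
    have 1: "derivable S (\<Gamma> + add_mset y \<Gamma>0) x" "derivable S (\<Gamma> + add_mset x \<Gamma>0) y"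
      using n.IH(1)[OF eq] n.IH(2)[OF eq] True by (simp_all add: add_mset_commute)
    have "has_n S" using n.hyps(1) eq by simp
    then show ?thesis using hn[OF True _ 1] True by simp
  next
    case False
    have m: "\<alpha> \<in># \<Gamma>0" using n.prems False by simp
    show ?thesis by (rule n_m[where a=x]; insert n m; auto simp: add_mset_commute)
  qed
next
  case (nef S' x \<Gamma>0 y)
  note eq = nef.prems(1)
  show ?case
  proof (cases "\<alpha> = Neg x")
    case True
    have 1: "derivable S (\<Gamma> + \<Gamma>0) x" using nef.IH[OF eq] True by simp
    have "has_nef S" using nef.hyps(1) eq by simp
    then show ?thesis using hnef[OF True _ 1] True by simp
  next
    case False
    have m: "\<alpha> \<in># \<Gamma>0" using nef.prems False by simp
    show ?thesis by (rule nef_m[where a=x]; insert nef m; auto simp: add_mset_commute)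
  qed
next
  case (copc S' x y \<Gamma>0)
  note eq = copc.prems(1)
  show ?case
  proof (cases "\<alpha> = Neg x")
    case True
    have 1: "derivable S (\<Gamma> + add_mset y \<Gamma>0) x" using copc.IH[OF eq] True by (simp add: add_mset_commute)
    have r: "derivable S (add_mset (Neg x) (add_mset y \<Gamma>0)) x" using copc.hyps(2) eq by simp
    have "has_copc S" using copc.hyps(1) eq by simp
    then show ?thesis using hcopc[OF True _ r 1] True by simp
  next
    case False
    have m: "\<alpha> \<in># \<Gamma>0" using copc.prems False by simp
    show ?thesis by (rule copc_m[where a=x]; insert copc m; auto simp: add_mset_commute)
  qed
qed

lemma inner':
  assumes IHs: "\<And>\<beta>. size \<beta> < size \<alpha> \<Longrightarrow> cutP S \<beta>"
    and L: "derivable S \<Gamma> \<alpha>"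
    and hdisj: "\<And>a b. \<alpha> = Disj a b \<Longrightarrow> derivable S \<Gamma> a \<or> derivable S \<Gamma> b"
    and hn: "\<And>a d \<Delta>0. \<alpha> = Neg a \<Longrightarrow> has_n S \<Longrightarrow> derivable S (\<Gamma> + add_mset d \<Delta>0) a
               \<Longrightarrow> derivable S (\<Gamma> + add_mset a \<Delta>0) d \<Longrightarrow> derivable S (\<Gamma> + \<Delta>0) (Neg d)"
    and hnef: "\<And>a d \<Delta>0. \<alpha> = Neg a \<Longrightarrow> has_nef S \<Longrightarrow> derivable S (\<Gamma> + \<Delta>0) a
               \<Longrightarrow> derivable S (\<Gamma> + \<Delta>0) (Neg d)"
    and hcopc: "\<And>a d \<Delta>0. \<alpha> = Neg a \<Longrightarrow> has_copc S \<Longrightarrow> derivable S (add_mset (Neg a) (add_mset d \<Delta>0)) a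
               \<Longrightarrow> derivable S (\<Gamma> + add_mset d \<Delta>0) a \<Longrightarrow> derivable S (\<Gamma> + \<Delta>0) (Neg d)"
    and R: "derivable S (add_mset \<alpha> \<Delta>) \<phi>"
  shows "derivable S (\<Gamma> + \<Delta>) \<phi>"
  using inner[OF IHs L hdisj hn hnef hcopc R refl] by simp

lemma inner_neg:
  assumes IHs: "\<And>\<beta>. size \<beta> < size (Neg a) \<Longrightarrow> cutP S \<beta>"
    and L: "derivable S \<Gamma> (Neg a)"
    and hn: "\<And>d \<Delta>0. has_n S \<Longrightarrow> derivable S (\<Gamma> + add_mset d \<Delta>0) a
               \<Longrightarrow> derivable S (\<Gamma> + add_mset a \<Delta>0) d \<Longrightarrow> derivable S (\<Gamma> + \<Delta>0) (Neg d)"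
    and hnef: "\<And>d \<Delta>0. has_nef S \<Longrightarrow> derivable S (\<Gamma> + \<Delta>0) a
               \<Longrightarrow> derivable S (\<Gamma> + \<Delta>0) (Neg d)"
    and hcopc: "\<And>d \<Delta>0. has_copc S \<Longrightarrow> derivable S (add_mset (Neg a) (add_mset d \<Delta>0)) a
               \<Longrightarrow> derivable S (\<Gamma> + add_mset d \<Delta>0) a \<Longrightarrow> derivable S (\<Gamma> + \<Delta>0) (Neg d)"
    and R: "derivable S (add_mset (Neg a) \<Delta>) \<phi>"
  shows "derivable S (\<Gamma> + \<Delta>) \<phi>"
proof (rule inner'[OF IHs L _ _ _ _ R])
  fix x y assume "Neg a = Disj x y" thus "derivable S \<Gamma> x \<or> derivable S \<Gamma> y" by simp
next
  fix a' d \<Delta>0 assume "Neg a = Neg a'" "has_n S" "derivable S (\<Gamma> + add_mset d \<Delta>0) a'"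
    "derivable S (\<Gamma> + add_mset a' \<Delta>0) d"
  thus "derivable S (\<Gamma> + \<Delta>0) (Neg d)" using hn by simp
next
  fix a' d \<Delta>0 assume "Neg a = Neg a'" "has_nef S" "derivable S (\<Gamma> + \<Delta>0) a'"
  thus "derivable S (\<Gamma> + \<Delta>0) (Neg d)" using hnef by simp
next
  fix a' d \<Delta>0 assume "Neg a = Neg a'" "has_copc S" "derivable S (add_mset (Neg a') (add_mset d \<Delta>0)) a'"
    "derivable S (\<Gamma> + add_mset d \<Delta>0) a'"
  thus "derivable S (\<Gamma> + \<Delta>0) (Neg d)" using hcopc by simp
qed



lemma mid: "derivable S \<Gamma> \<alpha> \<Longrightarrow> (\<And>\<beta>. size \<beta> < size \<alpha> \<Longrightarrow> cutP S \<beta>)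
   \<Longrightarrow> derivable S (add_mset \<alpha> \<Delta>) \<phi> \<Longrightarrow> derivable S (\<Gamma> + \<Delta>) \<phi>"
proof (induction arbitrary: \<Delta> \<phi> rule: derivable.induct)
  case (ax S p \<Gamma>)
  then show ?case using weak[of S "add_mset (Var p) \<Delta>" \<phi> \<Gamma>] by (simp add: ac_simps)
next
  case (top S \<Gamma>)
  then show ?case using top_rem[of S "add_mset Top \<Delta>" \<phi>] weak[of S \<Delta> \<phi> \<Gamma>] by (simp add: ac_simps)
next
  case (impR S a \<Gamma> b)
  show ?case
    apply (rule inner'[where \<alpha>="Imp a b" and S=S and \<Gamma>=\<Gamma>])
    using impR.prems(1) apply simp
    using impR.hyps derivable.impR apply blast
    by (simp_all add: impR.prems(2))
next
  case (conjR S \<Gamma> a b)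
  show ?case
    apply (rule inner'[where \<alpha>="Conj a b" and S=S and \<Gamma>=\<Gamma>])
    using conjR.prems(1) apply simp
    using conjR.hyps derivable.conjR apply blast
    by (simp_all add: conjR.prems(2))
next
  case (disjR1 S \<Gamma> a b)
  show ?case
    apply (rule inner'[where \<alpha>="Disj a b" and S=S and \<Gamma>=\<Gamma>])
    using disjR1.prems(1) apply simp
    using disjR1.hyps derivable.disjR1 apply blast
    by (insert disjR1.hyps, simp_all add: disjR1.prems(2))
next
  case (disjR2 S \<Gamma> b a)
  show ?case
    apply (rule inner'[where \<alpha>="Disj a b" and S=S and \<Gamma>=\<Gamma>])
    using disjR2.prems(1) apply simp
    using disjR2.hyps derivable.disjR2 apply blast
    by (insert disjR2.hyps, simp_all add: disjR2.prems(2))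
next
  case (impL S a b \<Gamma> \<psi>)
  have 1: "derivable S (add_mset (Imp a b) (\<Gamma> + \<Delta>)) a" using weak[OF impL.hyps(1), of \<Delta>] by simp
  have 2: "derivable S (add_mset b (\<Gamma> + \<Delta>)) \<phi>" using impL.IH(2) impL.prems by simp
  show ?case using derivable.impL[OF 1 2] by simp
next
  case (conjL S a b \<Gamma> \<psi>)
  have "derivable S (add_mset a (add_mset b (\<Gamma> + \<Delta>))) \<phi>" using conjL.IH[OF conjL.prems] by simp
  then show ?case using derivable.conjL by simp
next
  case (disjL S a \<Gamma> \<psi> b)
  have "derivable S (add_mset a (\<Gamma> + \<Delta>)) \<phi>" "derivable S (add_mset b (\<Gamma> + \<Delta>)) \<phi>"
    using disjL.IH(1)[OF disjL.prems] disjL.IH(2)[OF disjL.prems] by simp_all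
  then show ?case using derivable.disjL by simp
next
  case (n S c a \<Gamma>0)
  let ?G = "add_mset (Neg c) \<Gamma>0"
  have sa: "size a < size (Neg a)" by simp
  show ?case
  proof (rule inner_neg[where a=a and S=S and \<Gamma>="add_mset (Neg c) \<Gamma>0" and \<Delta>=\<Delta> and \<phi>=\<phi>])
    show "\<And>\<beta>. size \<beta> < size (Neg a) \<Longrightarrow> cutP S \<beta>" using n.prems by simp
    show "derivable S (add_mset (Neg c) \<Gamma>0) (Neg a)" using n.hyps derivable.n by blast
    show "derivable S (add_mset (Neg a) \<Delta>) \<phi>" by fact
  next
    fix d \<Delta>0
    assume A0: "derivable S (?G + add_mset d \<Delta>0) a"
      and B0: "derivable S (?G + add_mset a \<Delta>0) d"
    have A: "derivable S (add_mset (Neg c) (add_mset d (\<Gamma>0 + \<Delta>0))) a" using A0 by (simp add: add_mset_commute)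
    have B: "derivable S (add_mset (Neg c) (add_mset a (\<Gamma>0 + \<Delta>0))) d" using B0 by (simp add: add_mset_commute)
    have ca: "cutP S a" using n.prems by simp
    have L1: "derivable S (add_mset a ?G) c" using n.hyps(2) by (simp add: add_mset_commute)
    have "derivable S (add_mset (Neg c) (add_mset d (\<Gamma>0 + \<Delta>0)) + ?G) c" using cutD[OF ca A L1] .
    hence "derivable S (?G + ?G + add_mset d \<Delta>0) c" by (simp add: ac_simps add_mset_commute)
    from contr_mset[OF this] have 1: "derivable S (add_mset (Neg c) (add_mset d (\<Gamma>0 + \<Delta>0))) c" by (simp add: add_mset_commute)
    have B': "derivable S (add_mset a (?G + \<Delta>0)) d" using B by (simp add: add_mset_commute)
    have L2: "derivable S (add_mset c ?G) a" using n.hyps(3) by (simp add: add_mset_commute)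
    have "derivable S (add_mset c ?G + (?G + \<Delta>0)) d" using cutD[OF ca L2 B'] .
    hence "derivable S (?G + ?G + add_mset c \<Delta>0) d" by (simp add: ac_simps add_mset_commute)
    from contr_mset[OF this] have 2: "derivable S (add_mset (Neg c) (add_mset c (\<Gamma>0 + \<Delta>0))) d" by (simp add: add_mset_commute)
    show "derivable S (?G + \<Delta>0) (Neg d)" using derivable.n[OF n.hyps(1) 1 2] by simp
  next
    fix d \<Delta>0
    assume nf: "has_nef S" and A0: "derivable S (?G + \<Delta>0) a"
    have A: "derivable S (add_mset (Neg c) (\<Gamma>0 + \<Delta>0)) a" using A0 by simp
    have ca: "cutP S a" using n.prems by simp
    have L1: "derivable S (add_mset a ?G) c" using n.hyps(2) by (simp add: add_mset_commute)
    have "derivable S (add_mset (Neg c) (\<Gamma>0 + \<Delta>0) + ?G) c" using cutD[OF ca A L1] .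
    hence "derivable S (?G + ?G + \<Delta>0) c" by (simp add: ac_simps add_mset_commute)
    from contr_mset[OF this] have 1: "derivable S (add_mset (Neg c) (\<Gamma>0 + \<Delta>0)) c" by (simp add: add_mset_commute)
    show "derivable S (?G + \<Delta>0) (Neg d)" using derivable.nef[OF nf 1] by simp
  next
    fix d \<Delta>0
    assume "has_copc S"
    then show "derivable S (?G + \<Delta>0) (Neg d)"
      using n.hyps(1) by (auto simp: has_copc_def has_n_def)
  qed
next
  case (nef S c \<Gamma>0 a)
  let ?G = "add_mset (Neg c) \<Gamma>0"
  show ?case
  proof (rule inner_neg[where a=a and S=S and \<Gamma>="add_mset (Neg c) \<Gamma>0" and \<Delta>=\<Delta> and \<phi>=\<phi>])
    show "\<And>\<beta>. size \<beta> < size (Neg a) \<Longrightarrow> cutP S \<beta>" using nef.prems by simp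
    show "derivable S (add_mset (Neg c) \<Gamma>0) (Neg a)" using nef.hyps derivable.nef by blast
    show "derivable S (add_mset (Neg a) \<Delta>) \<phi>" by fact
  next
    fix d \<Delta>0
    have "derivable S (add_mset (Neg c) (\<Gamma>0 + \<Delta>0)) c" using weak[OF nef.hyps(2)] by simp
    thus "derivable S (?G + \<Delta>0) (Neg d)" using derivable.nef[OF nef.hyps(1)] by simp
  next
    fix d \<Delta>0
    have "derivable S (add_mset (Neg c) (\<Gamma>0 + \<Delta>0)) c" using weak[OF nef.hyps(2)] by simp
    thus "derivable S (?G + \<Delta>0) (Neg d)" using derivable.nef[OF nef.hyps(1)] by simp
  next
    fix d \<Delta>0
    assume "has_copc S"
    then show "derivable S (?G + \<Delta>0) (Neg d)"
      using nef.hyps(1) by (auto simp: has_copc_def has_nef_def)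
  qed
next
  case (copc S c a \<Gamma>0)
  let ?G = "add_mset (Neg c) \<Gamma>0"
  show ?case
  proof (rule inner_neg[where a=a and S=S and \<Gamma>="add_mset (Neg c) \<Gamma>0" and \<Delta>=\<Delta> and \<phi>=\<phi>])
    show "\<And>\<beta>. size \<beta> < size (Neg a) \<Longrightarrow> cutP S \<beta>" using copc.prems by simp
    show "derivable S (add_mset (Neg c) \<Gamma>0) (Neg a)" using copc.hyps derivable.copc by blast
    show "derivable S (add_mset (Neg a) \<Delta>) \<phi>" by fact
  next
    fix d \<Delta>0
    assume "has_n S"
    then show "derivable S (?G + \<Delta>0) (Neg d)"
      using copc.hyps(1) by (auto simp: has_copc_def has_n_def)
  next
    fix d \<Delta>0
    assume "has_nef S"
    then show "derivable S (?G + \<Delta>0) (Neg d)"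
      using copc.hyps(1) by (auto simp: has_copc_def has_nef_def)
  next
    fix d \<Delta>0
    assume A0: "derivable S (?G + add_mset d \<Delta>0) a"
    have A: "derivable S (add_mset (Neg c) (add_mset d (\<Gamma>0 + \<Delta>0))) a" using A0 by (simp add: add_mset_commute)
    have ca: "cutP S a" using copc.prems by simp
    have L1: "derivable S (add_mset a ?G) c" using copc.hyps(2) by (simp add: add_mset_commute)
    have "derivable S (add_mset (Neg c) (add_mset d (\<Gamma>0 + \<Delta>0)) + ?G) c" using cutD[OF ca A L1] .
    hence "derivable S (?G + ?G + add_mset d \<Delta>0) c" by (simp add: ac_simps add_mset_commute)
    from contr_mset[OF this] have 1: "derivable S (add_mset (Neg c) (add_mset d (\<Gamma>0 + \<Delta>0))) c" by (simp add: add_mset_commute)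
    show "derivable S (?G + \<Delta>0) (Neg d)" using derivable.copc[OF copc.hyps(1) 1] by simp
  qed
next
  case (an S a \<Gamma>)
  show ?case
  proof (rule inner_neg[where a=a and S=S and \<Gamma>=\<Gamma> and \<Delta>=\<Delta> and \<phi>=\<phi>])
    show "\<And>\<beta>. size \<beta> < size (Neg a) \<Longrightarrow> cutP S \<beta>" using an.prems by simp
    show "derivable S \<Gamma> (Neg a)" using an.hyps derivable.an by blast
    show "derivable S (add_mset (Neg a) \<Delta>) \<phi>" by fact
  next
    fix d \<Delta>0
    assume "has_n S"
    then show "derivable S (\<Gamma> + \<Delta>0) (Neg d)"
      using an.hyps(1) by (auto simp: has_an_def has_n_def)
  next
    fix d \<Delta>0
    assume "has_nef S"
    then show "derivable S (\<Gamma> + \<Delta>0) (Neg d)"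
      using an.hyps(1) by (auto simp: has_an_def has_nef_def)
  next
    fix d \<Delta>0
    assume hc: "has_copc S" and R: "derivable S (add_mset (Neg a) (add_mset d \<Delta>0)) a"
      and A: "derivable S (\<Gamma> + add_mset d \<Delta>0) a"
    have ca: "cutP S a" using an.prems by simp
    have "derivable S (add_mset (Neg a) (add_mset d (add_mset d \<Delta>0))) a" using weak1[OF R, of d]
      by (simp add: add_mset_commute)
    from derivable.copc[OF hc this] have R2: "derivable S (add_mset (Neg a) (add_mset d \<Delta>0)) (Neg d)" .
    have "derivable S (add_mset a \<Gamma> + add_mset d \<Delta>0) (Neg d)" using an.IH[OF an.prems(1) R2] .
    hence h: "derivable S (add_mset a (\<Gamma> + add_mset d \<Delta>0)) (Neg d)" by (simp add: add_mset_commute)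
    from cutD[OF ca A h] have "derivable S ((\<Gamma> + add_mset d \<Delta>0) + (\<Gamma> + add_mset d \<Delta>0)) (Neg d)" .
    hence "derivable S ((\<Gamma> + add_mset d \<Delta>0) + (\<Gamma> + add_mset d \<Delta>0) + {#}) (Neg d)" by simp
    from contr_mset[OF this] have "derivable S (add_mset d (\<Gamma> + \<Delta>0)) (Neg d)" by (simp add: add_mset_commute)
    from derivable.an[OF an.hyps(1) this] show "derivable S (\<Gamma> + \<Delta>0) (Neg d)" .
  qed
qed

lemma cut_all: "cutP S \<alpha>"
proof (induction \<alpha> rule: measure_induct_rule[of size])
  case (less \<alpha>)
  show ?case unfolding cutP_def
  proof (intro allI impI)
    fix \<Gamma> \<Delta> \<phi> assume a: "derivable S \<Gamma> \<alpha>" "derivable S (add_mset \<alpha> \<Delta>) \<phi>"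
    show "derivable S (\<Gamma> + \<Delta>) \<phi>" by (rule mid[OF a(1) less a(2)])
  qed
qed

theorem theorem4p1:
  fixes S :: sys and \<Gamma> \<Delta> :: "fm multiset" and \<alpha> \<phi> :: fm
  assumes "derivable S \<Gamma> \<alpha>"
    and "derivable S (add_mset \<alpha> \<Delta>) \<phi>"
  shows "derivable S (\<Gamma> + \<Delta>) \<phi>"
  using cutD[OF cut_all assms] .


end
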